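(* For every $h>0$, the function $v(\cdot,h)$ satisfies $v_{yy}(y,h)>0$ in each of the three regions $y\ge e^{\lambda\beta h}$, $e^{(\lambda-1)\beta h}<y<e^{\lambda\beta h}$ and $(1-\lambda)e^{(\lambda-1)\beta h}\le y\le e^{(\lambda-1)\beta h}$ (using the corresponding piece of the formula). In particular the inverse Legendre transform $\inf_{y\ge(1-\lambda)e^{(\lambda-1)\beta h}}[v(y,h)+xy]$ is well defined, and the function $\pi^\dagger(y,h)$ is strictly positive for all $h>0$ and $y\ge(1-\lambda)e^{(\lambda-1)\beta h}$.
   Context: Constants: $r>0$, $\mu>r$, $\sigma>0$, $\beta>0$, $\lambda\in(0,1)$, $\kappa:=(\mu-r)/\sigma>0$, $r_{1,2}=\frac12(1\pm\sqrt{1+8r/\kappa^2})$ (so $r_1>1>0>r_2$ and $r_1(r_1-1)=r_2(r_2-1)=2r/\kappa^2$). For $h\ge0$: $C_6(h):=\frac{(1-\lambda)^{r_1-r_2}}{(r_1-r_2)\beta r}\Big[\frac{1}{1-r_2}e^{(\lambda-1)(1-r_2)\beta h}-\frac{\lambda}{\lambda(1-r_2)-(r_1-r_2)}e^{[\lambda(1-r_2)-(r_1-r_2)]\beta h}\Big]$, $C_4(h):=C_6(h)+\frac{(1-r_1)\kappa^2}{2(r_1-r_2)\beta r^2}e^{(\lambda-1)(1-r_2)\beta h}$, $C_2(h):=C_6(h)+\frac{(1-r_1)\kappa^2}{2(r_1-r_2)\beta r^2}\big[e^{(\lambda-1)(1-r_2)\beta h}-e^{\lambda(1-r_2)\beta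 h}\big]$, $C_3(h):=\frac{(r_2-1)\kappa^2}{2(r_1-r_2)\beta r^2}e^{\lambda(1-r_1)\beta h}$, $C_5(h):=\frac{(1-r_2)\kappa^2}{2(r_1-r_2)\beta r^2}\big[e^{(\lambda-1)(1-r_1)\beta h}-e^{\lambda(1-r_1)\beta h}\big]$. The dual function $v$ on $\{y\ge(1-\lambda)e^{(\lambda-1)\beta h}\}$ is $v(y,h)=C_2(h)y^{r_2}-\frac{1}{r\beta}e^{\lambda\beta h}$ if $y\ge e^{\lambda\beta h}$; $v(y,h)=C_3(h)y^{r_1}+C_4(h)y^{r_2}-\frac{y}{r\beta}+\frac{y}{r\beta}(\ln y-\lambda\beta h+\frac{\kappa^2}{2r})$ if $e^{(\lambda-1)\beta h}<y<e^{\lambda\beta h}$; $v(y,h)=C_5(h)y^{r_1}+C_6(h)y^{r_2}-\frac1rhy-\frac{1}{r\beta}e^{(\lambda-1)\beta h}$ if $(1-\lambda)e^{(\lambda-1)\beta h}\le y\le e^{(\lambda-1)\beta h}$. The feedback portfolio function is $\pi^\dagger(y,h)=\frac{\mu-r}{\sigma^2}\cdot\frac{2r}{\kappa^2}C_2(h)y^{r_2-1}$ if $y\ge e^{\lambda\beta h}$; $\frac{\mu-r}{\sigma^2}\big[\frac{2r}{\kappa^2}C_3(h)y^{r_1-1}+\frac{2r}{\kappa^2}C_4(h)y^{r_2-1}+\frac1{r\beta}\big]$ if $e^{(\lambda-1)\beta h}<y<e^{\lambda\beta h}$; $\frac{\mu-r}{\sigma^2}\big[\frac{2r}{\kappa^2}C_5(h)y^{r_1-1}+\frac{2r}{\kappa^2}C_6(h)y^{r_2-1}\big]$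 if $(1-\lambda)e^{(\lambda-1)\beta h}\le y\le e^{(\lambda-1)\beta h}$ (note $\pi^\dagger=\frac{\mu-r}{\sigma^2}yv_{yy}$). *)

theory Defs
  imports "HOL-Analysis.Analysis"
begin

definition kap :: "real \<Rightarrow> real \<Rightarrow> real \<Rightarrow> real" where
  "kap r mu sig = (mu - r) / sig"

definition r1 :: "real \<Rightarrow> real \<Rightarrow> real \<Rightarrow> real" where
  "r1 r mu sig = (1 + sqrt (1 + 8 * r / (kap r mu sig)\<^sup>2)) / 2"

definition r2 :: "real \<Rightarrow> real \<Rightarrow> real \<Rightarrow> real" where
  "r2 r mu sig = (1 - sqrt (1 + 8 * r / (kap r mu sig)\<^sup>2)) / 2"

definition C6 :: "real \<Rightarrow> real \<Rightarrow> real \<Rightarrow> real \<Rightarrow> real \<Rightarrow> real \<Rightarrow> real" where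
  "C6 r mu sig beta lam h =
     (let a = r1 r mu sig; b = r2 r mu sig in
      (1 - lam) powr (a - b) / ((a - b) * beta * r) *
      (1 / (1 - b) * exp ((lam - 1) * (1 - b) * beta * h)
       - lam / (lam * (1 - b) - (a - b)) * exp ((lam * (1 - b) - (a - b)) * beta * h)))"

definition C4 :: "real \<Rightarrow> real \<Rightarrow> real \<Rightarrow> real \<Rightarrow> real \<Rightarrow> real \<Rightarrow> real" where
  "C4 r mu sig beta lam h =
     (let a = r1 r mu sig; b = r2 r mu sig; k = kap r mu sig in
      C6 r mu sig beta lam h
      + (1 - a) * k\<^sup>2 / (2 * (a - b) * beta * r\<^sup>2) * exp ((lam - 1) * (1 - b) * beta * h))"

definition C2 :: "real \<Rightarrow> real \<Rightarrow> real \<Rightarrow> real \<Rightarrow> real \<Rightarrow> real \<Rightarrow> real" where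
  "C2 r mu sig beta lam h =
     (let a = r1 r mu sig; b = r2 r mu sig; k = kap r mu sig in
      C6 r mu sig beta lam h
      + (1 - a) * k\<^sup>2 / (2 * (a - b) * beta * r\<^sup>2) *
        (exp ((lam - 1) * (1 - b) * beta * h) - exp (lam * (1 - b) * beta * h)))"

definition C3 :: "real \<Rightarrow> real \<Rightarrow> real \<Rightarrow> real \<Rightarrow> real \<Rightarrow> real \<Rightarrow> real" where
  "C3 r mu sig beta lam h =
     (let a = r1 r mu sig; b = r2 r mu sig; k = kap r mu sig in
      (b - 1) * k\<^sup>2 / (2 * (a - b) * beta * r\<^sup>2) * exp (lam * (1 - a) * beta * h))"

definition C5 :: "real \<Rightarrow> real \<Rightarrow> real \<Rightarrow> real \<Rightarrow> real \<Rightarrow> real \<Rightarrow> real" where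
  "C5 r mu sig beta lam h =
     (let a = r1 r mu sig; b = r2 r mu sig; k = kap r mu sig in
      (1 - b) * k\<^sup>2 / (2 * (a - b) * beta * r\<^sup>2) *
        (exp ((lam - 1) * (1 - a) * beta * h) - exp (lam * (1 - a) * beta * h)))"

definition vA :: "real \<Rightarrow> real \<Rightarrow> real \<Rightarrow> real \<Rightarrow> real \<Rightarrow> real \<Rightarrow> real \<Rightarrow> real" where
  "vA r mu sig beta lam h y =
     C2 r mu sig beta lam h * y powr (r2 r mu sig) - 1 / (r * beta) * exp (lam * beta * h)"

definition vB :: "real \<Rightarrow> real \<Rightarrow> real \<Rightarrow> real \<Rightarrow> real \<Rightarrow> real \<Rightarrow> real \<Rightarrow> real" where
  "vB r mu sig beta lam h y =
     C3 r mu sig beta lam h * y powr (r1 r mu sig)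
     + C4 r mu sig beta lam h * y powr (r2 r mu sig)
     - y / (r * beta)
     + y / (r * beta) * (ln y - lam * beta * h + (kap r mu sig)\<^sup>2 / (2 * r))"

definition vC :: "real \<Rightarrow> real \<Rightarrow> real \<Rightarrow> real \<Rightarrow> real \<Rightarrow> real \<Rightarrow> real \<Rightarrow> real" where
  "vC r mu sig beta lam h y =
     C5 r mu sig beta lam h * y powr (r1 r mu sig)
     + C6 r mu sig beta lam h * y powr (r2 r mu sig)
     - 1 / r * h * y - 1 / (r * beta) * exp ((lam - 1) * beta * h)"

definition vdual :: "real \<Rightarrow> real \<Rightarrow> real \<Rightarrow> real \<Rightarrow> real \<Rightarrow> real \<Rightarrow> real \<Rightarrow> real" where
  "vdual r mu sig beta lam y h =
     (if exp (lam * beta * h) \<le> y then vA r mu sig beta lam h y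
      else if exp ((lam - 1) * beta * h) < y then vB r mu sig beta lam h y
      else vC r mu sig beta lam h y)"

definition pidag :: "real \<Rightarrow> real \<Rightarrow> real \<Rightarrow> real \<Rightarrow> real \<Rightarrow> real \<Rightarrow> real \<Rightarrow> real" where
  "pidag r mu sig beta lam y h =
     (let a = r1 r mu sig; b = r2 r mu sig; k = kap r mu sig in
      if exp (lam * beta * h) \<le> y then
        (mu - r) / sig\<^sup>2 * (2 * r / k\<^sup>2 * C2 r mu sig beta lam h * y powr (b - 1))
      else if exp ((lam - 1) * beta * h) < y then
        (mu - r) / sig\<^sup>2 * (2 * r / k\<^sup>2 * C3 r mu sig beta lam h * y powr (a - 1)
          + 2 * r / k\<^sup>2 * C4 r mu sig beta lam h * y powr (b - 1) + 1 / (r * beta))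
      else
        (mu - r) / sig\<^sup>2 * (2 * r / k\<^sup>2 * C5 r mu sig beta lam h * y powr (a - 1)
          + 2 * r / k\<^sup>2 * C6 r mu sig beta lam h * y powr (b - 1)))"

end

theory Submission imports Defs begin

definition G :: "real\<Rightarrow>real\<Rightarrow>real\<Rightarrow>real\<Rightarrow>real\<Rightarrow>real\<Rightarrow>real\<Rightarrow>real\<Rightarrow>real" where
 "G c1 q1 c2 q2 c3 c4 c5 y = c1*y powr q1 + c2*y powr q2 + c3*y + c4*(y*ln y) + c5"

definition G1 :: "real\<Rightarrow>real\<Rightarrow>real\<Rightarrow>real\<Rightarrow>real\<Rightarrow>real\<Rightarrow>real\<Rightarrow>real" where
 "G1 c1 q1 c2 q2 c3 c4 y = c1*q1*y powr (q1-1) + c2*q2*y powr (q2-1) + c3 + c4*(ln y + 1)"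

lemma G_deriv: "z > 0 \<Longrightarrow> (G c1 q1 c2 q2 c3 c4 c5 has_real_derivative G1 c1 q1 c2 q2 c3 c4 z) (at z)"
  unfolding G_def G1_def
  apply (rule derivative_eq_intros has_real_derivative_powr DERIV_ln_divide refl | assumption)+
  by (auto simp: field_simps)

lemma G1_deriv: "z > 0 \<Longrightarrow> (G1 c1 q1 c2 q2 c3 c4 has_real_derivative
     c1*q1*(q1-1)*z powr (q1-2) + c2*q2*(q2-1)*z powr (q2-2) + c4/z) (at z)"
  unfolding G1_def
  apply (rule derivative_eq_intros has_real_derivative_powr DERIV_ln_divide refl | assumption)+
  by (auto simp: field_simps)

lemma G_d2: assumes "y > 0"
  shows "deriv (deriv (G c1 q1 c2 q2 c3 c4 c5)) y = c1*q1*(q1-1)*y powr (q1-2) + c2*q2*(q2-1)*y powr (q2-2) + c4/y"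
proof -
  have "eventually (\<lambda>z. z > 0) (nhds y)" using assms eventually_nhds_in_open[of "{0<..}" y] by auto
  hence "eventually (\<lambda>z. deriv (G c1 q1 c2 q2 c3 c4 c5) z = G1 c1 q1 c2 q2 c3 c4 z) (nhds y)"
    by (rule eventually_mono) (use G_deriv DERIV_imp_deriv in blast)
  hence "deriv (deriv (G c1 q1 c2 q2 c3 c4 c5)) y = deriv (G1 c1 q1 c2 q2 c3 c4) y"
    by (rule deriv_cong_ev) simp
  also have "\<dots> = c1*q1*(q1-1)*y powr (q1-2) + c2*q2*(q2-1)*y powr (q2-2) + c4/y" by (rule DERIV_imp_deriv[OF G1_deriv[OF assms]])
  finally show ?thesis .
qed

lemma vA_G: "vA r mu sig beta lam h = G (C2 r mu sig beta lam h) (r2 r mu sig) 0 0 0 0 (- (1/(r*beta)) * exp (lam*beta*h))"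
  by (rule ext) (simp add: vA_def G_def)

lemma vB_G: "vB r mu sig beta lam h = G (C3 r mu sig beta lam h) (r1 r mu sig) (C4 r mu sig beta lam h) (r2 r mu sig)
   (- 1/(r*beta) + (- lam*beta*h + (kap r mu sig)\<^sup>2/(2*r))/(r*beta)) (1/(r*beta)) 0"
  apply (rule ext) apply (simp add: vB_def G_def add_divide_distrib diff_divide_distrib right_diff_distrib distrib_left)
  by (cases "r=0"; cases "beta = 0") (auto simp: field_simps)

lemma vC_G: "vC r mu sig beta lam h = G (C5 r mu sig beta lam h) (r1 r mu sig) (C6 r mu sig beta lam h) (r2 r mu sig)
   (- 1/r*h) 0 (- (1/(r*beta)) * exp ((lam-1)*beta*h))"
  by (rule ext) (simp add: vC_def G_def field_simps)

lemma G_cont: "0 < m \<Longrightarrow> continuous_on {m..M} (G c1 q1 c2 q2 c3 c4 c5)"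
  by (intro continuous_at_imp_continuous_on ballI) (meson DERIV_isCont G_deriv atLeastAtMost_iff less_le_trans)

lemma G_bdd: assumes "0 < m" obtains K where "\<forall>y\<in>{m..M}. G c1 q1 c2 q2 c3 c4 c5 y \<ge> K"
proof -
  have "compact (G c1 q1 c2 q2 c3 c4 c5 ` {m..M})"
    by (rule compact_continuous_image[OF G_cont[OF assms]]) simp
  then obtain K where "\<forall>x\<in>G c1 q1 c2 q2 c3 c4 c5 ` {m..M}. norm x \<le> K"
    using compact_imp_bounded bounded_iff by metis
  hence "\<forall>y\<in>{m..M}. G c1 q1 c2 q2 c3 c4 c5 y \<ge> -K" by force
  thus ?thesis using that by blast
qed


lemma main_facts:
  fixes r mu sig beta lam h :: real
  assumes "r > 0" "mu > r" "sig > 0" "beta > 0" "0 < lam" "lam < 1" "h > 0"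
  shows "C6 r mu sig beta lam h > 0" "C5 r mu sig beta lam h > 0" "C2 r mu sig beta lam h > 0"
    "r1 r mu sig * (r1 r mu sig - 1) > 0" "r2 r mu sig * (r2 r mu sig - 1) > 0"
    "r1 r mu sig * (r1 r mu sig - 1) = 2*r/(kap r mu sig)\<^sup>2"
    "r2 r mu sig * (r2 r mu sig - 1) = 2*r/(kap r mu sig)\<^sup>2"
    "\<And>y. exp ((lam - 1) * beta * h) < y \<Longrightarrow> y < exp (lam * beta * h) \<Longrightarrow>
      C3 r mu sig beta lam h * (2*r/(kap r mu sig)\<^sup>2) * y powr (r1 r mu sig)
      + C4 r mu sig beta lam h * (2*r/(kap r mu sig)\<^sup>2) * y powr (r2 r mu sig) + y/(r*beta) > 0"
proof -
  define k where "k = kap r mu sig"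
  define s where "s = sqrt (1 + 8 * r / k\<^sup>2)"
  define a where "a = r1 r mu sig"
  define b where "b = r2 r mu sig"
  define Bh where "Bh = beta * h"
  have k: "k > 0" using assms unfolding k_def kap_def by auto
  have s1: "s > 1" unfolding s_def using k assms by (simp add: real_less_rsqrt)
  have ss: "s\<^sup>2 = 1 + 8 * r / k\<^sup>2" unfolding s_def using k assms by simp
  have a: "a = (1+s)/2" unfolding a_def r1_def s_def k_def ..
  have b: "b = (1-s)/2" unfolding b_def r2_def s_def k_def ..
  have ab: "a - b = s" "1 - b = a" "1 - a = b" using a b by auto
  have a1: "a > 1" using a s1 by simp
  have b0: "b < 0" using b s1 by simp
  have Q: "a * (a-1) = 2*r/k\<^sup>2" "b*(b-1) = 2*r/k\<^sup>2"
    using ss unfolding a b by (simp_all add: field_simps power2_eq_square)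
  have Qp: "2*r/k\<^sup>2 > 0" using assms k by simp
  have Bh: "Bh > 0" unfolding Bh_def using assms by simp
  have e0: "s - lam * a = -(lam * a - s)" by simp
  have e: "- lam / (lam * a - s) = lam / (s - lam * a)" unfolding e0 by (simp only: divide_minus_right minus_divide_left)
  have C6e: "C6 r mu sig beta lam h = (1 - lam) powr s / (s * beta * r) *
       (1 / a * exp ((lam - 1) * a * beta * h) + lam / (s - lam * a) * exp ((lam * a - s) * beta * h))"
    unfolding C6_def Let_def a_def[symmetric] b_def[symmetric] ab e[symmetric] by simp
  have den: "s - lam * a > 0" proof -
    have "lam * a < a" using assms a1 by simp
    thus ?thesis using ab b0 by linarith
  qed
  have C6p: "C6 r mu sig beta lam h > 0"
    unfolding C6e using assms s1 a1 den
    by (intro mult_pos_pos divide_pos_pos add_pos_pos) auto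
  show "C6 r mu sig beta lam h > 0" by (fact C6p)
  have K: "k\<^sup>2 / (2 * (a - b) * beta * r\<^sup>2) > 0" using k s1 ab assms by simp
  have C5e: "C5 r mu sig beta lam h = a * (k\<^sup>2 / (2 * (a - b) * beta * r\<^sup>2)) *
        (exp ((lam - 1) * b * Bh) - exp (lam * b * Bh))"
    unfolding C5_def Let_def a_def[symmetric] b_def[symmetric] k_def[symmetric] ab Bh_def
    by (simp add: algebra_simps)
  have "(lam - 1) * b * Bh > lam * b * Bh" using b0 Bh
    by (simp add: mult_less_0_iff algebra_simps)
  hence d5: "exp ((lam - 1) * b * Bh) - exp (lam * b * Bh) > 0" by simp
  have a0: "a > 0" using a1 by simp
  show "C5 r mu sig beta lam h > 0" unfolding C5e using mult_pos_pos[OF mult_pos_pos[OF a0 K] d5] .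
  have C2e: "C2 r mu sig beta lam h = C6 r mu sig beta lam h + (-b) * (k\<^sup>2 / (2 * (a - b) * beta * r\<^sup>2)) *
        (exp (lam * a * Bh) - exp ((lam - 1) * a * Bh))"
    unfolding C2_def Let_def a_def[symmetric] b_def[symmetric] k_def[symmetric] ab Bh_def
    by (simp add: algebra_simps)
  have "(lam - 1) * a * Bh < lam * a * Bh" using a1 Bh by simp
  hence "exp (lam * a * Bh) - exp ((lam - 1) * a * Bh) > 0" by simp
  thus "C2 r mu sig beta lam h > 0" unfolding C2e using K b0 C6p
    by (intro add_pos_pos mult_pos_pos) auto
  show "r1 r mu sig * (r1 r mu sig - 1) > 0" "r2 r mu sig * (r2 r mu sig - 1) > 0"
    "r1 r mu sig * (r1 r mu sig - 1) = 2*r/(kap r mu sig)\<^sup>2"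
    "r2 r mu sig * (r2 r mu sig - 1) = 2*r/(kap r mu sig)\<^sup>2"
    using Q Qp unfolding a_def b_def k_def by auto
  fix y assume y1: "exp ((lam - 1) * beta * h) < y" and y2: "y < exp (lam * beta * h)"
  have y0: "y > 0" using y1 by (smt (verit) exp_gt_zero)
  define Ya where "Ya = y powr a"
  define Yb where "Yb = y powr b"
  have ab1: "a + b = 1" using ab by simp
  have YY: "Ya * Yb = y" unfolding Ya_def Yb_def powr_add[symmetric] ab1 using y0 by simp
  have Ya0: "Ya > 0" "Yb > 0" unfolding Ya_def Yb_def using y0 by auto
  have ly1: "ln y > (lam - 1) * Bh" using y1 y0 unfolding Bh_def
    by (metis exp_less_cancel_iff exp_ln mult.assoc)
  have ly2: "ln y < lam * Bh" using y2 y0 unfolding Bh_def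
    by (metis exp_less_cancel_iff exp_ln mult.assoc)
  have E1: "exp ((lam - 1) * a * Bh) < Ya" unfolding Ya_def powr_def using y0 ly1 a1
    by (simp add: mult.commute[of _ a] mult.left_commute[of _ a] mult.assoc)
  have E2: "exp (lam * b * Bh) < Yb" unfolding Yb_def powr_def using y0 ly2 b0
    by (simp add: mult.commute[of _ b] mult.left_commute[of _ b] mult.assoc mult_less_cancel_left_neg)
  have t1: "y - exp (lam * b * Bh) * Ya > 0" using E2 Ya0 YY
    by (metis diff_gt_0_iff_gt mult.commute mult_strict_left_mono)
  have t2: "y - exp ((lam - 1) * a * Bh) * Yb > 0" using E1 Ya0 YY
    by (metis diff_gt_0_iff_gt mult_strict_right_mono)
  have br: "a * (y - exp (lam * b * Bh) * Ya) + (-b) * (y - exp ((lam - 1) * a * Bh) * Yb) > 0"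
    using t1 t2 a1 b0 by (intro add_pos_pos mult_pos_pos) auto
  define D where "D = s * beta * r"
  have D: "D > 0" unfolding D_def using s1 assms by simp
  have bm1: "b - 1 = -a" using ab by simp
  have knz: "k \<noteq> 0" "s \<noteq> 0" "beta \<noteq> 0" "r \<noteq> 0" using k s1 assms by auto
  have g: "\<And>X. c * k\<^sup>2 / (2 * s * beta * r\<^sup>2) * X * (2*r/k\<^sup>2) = c * X / D" for c
    unfolding D_def using knz by (simp add: field_simps power2_eq_square)
  have eB1: "exp (lam * b * beta * h) = exp (lam * b * Bh)" "exp ((lam - 1) * a * beta * h) = exp ((lam - 1) * a * Bh)"
    unfolding Bh_def by (simp_all add: mult.assoc)
  have C3Q: "C3 r mu sig beta lam h * (2*r/k\<^sup>2) = - a * exp (lam * b * Bh) / D"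
    unfolding C3_def Let_def a_def[symmetric] b_def[symmetric] k_def[symmetric] ab bm1 eB1 g by simp
  have C4Q: "C4 r mu sig beta lam h * (2*r/k\<^sup>2) = C6 r mu sig beta lam h * (2*r/k\<^sup>2)
     + b * exp ((lam - 1) * a * Bh) / D"
    unfolding C4_def Let_def a_def[symmetric] b_def[symmetric] k_def[symmetric] ab eB1 distrib_right g by simp
  have "C3 r mu sig beta lam h * (2*r/k\<^sup>2) * Ya + C4 r mu sig beta lam h * (2*r/k\<^sup>2) * Yb + y/(r*beta)
     = C6 r mu sig beta lam h * (2*r/k\<^sup>2) * Yb +
       (a * (y - exp (lam * b * Bh) * Ya) + (-b) * (y - exp ((lam - 1) * a * Bh) * Yb)) / D"
  proof -
    have yD: "y/(r*beta) = (a - b)*y/D" unfolding D_def ab(1) using knz by (simp add: field_simps)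
    show ?thesis unfolding C3Q C4Q yD using D by (simp add: field_simps)
  qed
  also have "\<dots> > 0" by (rule add_pos_pos[OF mult_pos_pos[OF mult_pos_pos[OF C6p Qp] Ya0(2)] divide_pos_pos[OF br D]])
  finally show "C3 r mu sig beta lam h * (2*r/(kap r mu sig)\<^sup>2) * y powr (r1 r mu sig)
      + C4 r mu sig beta lam h * (2*r/(kap r mu sig)\<^sup>2) * y powr (r2 r mu sig) + y/(r*beta) > 0"
    unfolding Ya_def Yb_def a_def b_def k_def .
qed


lemma powr_m2: "(y::real) > 0 \<Longrightarrow> y powr (p - 2) = y powr p / y\<^sup>2"
  by (simp add: powr_diff)

lemma powr_m1: "(y::real) > 0 \<Longrightarrow> y powr (p - 1) = y powr p / y"
  by (simp add: powr_diff)

theorem lemma3p1: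
  fixes r mu sig beta lam h :: real
  assumes "r > 0" "mu > r" "sig > 0" "beta > 0" "0 < lam" "lam < 1" "h > 0"
  shows "(\<forall>y. exp (lam * beta * h) \<le> y \<longrightarrow>
            deriv (deriv (vA r mu sig beta lam h)) y > 0)
       \<and> (\<forall>y. exp ((lam - 1) * beta * h) < y \<and> y < exp (lam * beta * h) \<longrightarrow>
            deriv (deriv (vB r mu sig beta lam h)) y > 0)
       \<and> (\<forall>y. (1 - lam) * exp ((lam - 1) * beta * h) \<le> y \<and> y \<le> exp ((lam - 1) * beta * h) \<longrightarrow>
            deriv (deriv (vC r mu sig beta lam h)) y > 0)
       \<and> (\<forall>x>0. bdd_below ((\<lambda>y. vdual r mu sig beta lam y h + x * y) `
                 {(1 - lam) * exp ((lam - 1) * beta * h)..}))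
       \<and> (\<forall>y. (1 - lam) * exp ((lam - 1) * beta * h) \<le> y \<longrightarrow>
            pidag r mu sig beta lam y h > 0)"
proof -
  note F = main_facts[OF assms]
  define a where "a = r1 r mu sig"
  define b where "b = r2 r mu sig"
  define Q where "Q = 2*r/(kap r mu sig)\<^sup>2"
  define M where "M = exp (lam * beta * h)"
  define m where "m = exp ((lam - 1) * beta * h)"
  define y0 where "y0 = (1 - lam) * m"
  have m0: "m > 0" unfolding m_def by simp
  have y00: "y0 > 0" unfolding y0_def using m0 assms by simp
  have mM: "m < M" unfolding m_def M_def using assms by simp
  have Qa: "a*(a-1) = Q" and Qb: "b*(b-1) = Q" and Qp: "Q > 0"
    using F(4-7) unfolding a_def b_def Q_def by auto
  have C6p: "C6 r mu sig beta lam h > 0" and C5p: "C5 r mu sig beta lam h > 0"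
    and C2p: "C2 r mu sig beta lam h > 0" using F(1-3) by auto
  have rb: "r * beta > 0" using assms by simp
  define P where "P y = C3 r mu sig beta lam h * Q * y powr a + C4 r mu sig beta lam h * Q * y powr b + y/(r*beta)" for y
  have Pp: "P y > 0" if "m < y" "y < M" for y
    using F(8)[of y] that unfolding P_def a_def b_def Q_def m_def M_def by simp
  have dA: "deriv (deriv (vA r mu sig beta lam h)) y = C2 r mu sig beta lam h * Q * y powr (b - 2)" if "y > 0" for y
    unfolding vA_G G_d2[OF that] using Qb by (simp add: b_def)
  have Qa': "\<And>c. c*a*(a-1) = c*Q" and Qb': "\<And>c. c*b*(b-1) = c*Q" using Qa Qb by (simp_all add: mult.assoc)
  have dB: "deriv (deriv (vB r mu sig beta lam h)) y = P y / y\<^sup>2" if "y > 0" for y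
    unfolding vB_G G_d2[OF that] P_def a_def[symmetric] b_def[symmetric] Qa' Qb'
      powr_m2[OF that] using that by (simp add: field_simps power2_eq_square)
  have dC: "deriv (deriv (vC r mu sig beta lam h)) y = C5 r mu sig beta lam h * Q * y powr (a - 2)
      + C6 r mu sig beta lam h * Q * y powr (b - 2)" if "y > 0" for y
    unfolding vC_G G_d2[OF that] a_def[symmetric] b_def[symmetric] Qa' Qb' by simp
  have part1: "\<forall>y. exp (lam * beta * h) \<le> y \<longrightarrow> deriv (deriv (vA r mu sig beta lam h)) y > 0"
  proof (intro allI impI)
    fix y assume "exp (lam * beta * h) \<le> y"
    hence y: "y > 0" by (smt (verit) exp_gt_zero)
    show "deriv (deriv (vA r mu sig beta lam h)) y > 0" unfolding dA[OF y] using C2p Qp y by simp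
  qed
  have part2: "\<forall>y. exp ((lam - 1) * beta * h) < y \<and> y < exp (lam * beta * h) \<longrightarrow>
            deriv (deriv (vB r mu sig beta lam h)) y > 0"
  proof (intro allI impI)
    fix y assume a: "exp ((lam - 1) * beta * h) < y \<and> y < exp (lam * beta * h)"
    hence y: "y > 0" using m0 m_def by linarith
    show "deriv (deriv (vB r mu sig beta lam h)) y > 0" unfolding dB[OF y]
      using Pp[of y] a y unfolding m_def M_def by simp
  qed
  have part3: "\<forall>y. (1 - lam) * exp ((lam - 1) * beta * h) \<le> y \<and> y \<le> exp ((lam - 1) * beta * h) \<longrightarrow>
            deriv (deriv (vC r mu sig beta lam h)) y > 0"
  proof (intro allI impI)
    fix y assume a: "(1 - lam) * exp ((lam - 1) * beta * h) \<le> y \<and> y \<le> exp ((lam - 1) * beta * h)"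
    hence y: "y > 0" using y00 unfolding y0_def m_def by linarith
    show "deriv (deriv (vC r mu sig beta lam h)) y > 0" unfolding dC[OF y]
      using C5p C6p Qp y by (intro add_pos_pos mult_pos_pos) auto
  qed
  have part4: "\<forall>x>0. bdd_below ((\<lambda>y. vdual r mu sig beta lam y h + x * y) ` {y0..})"
  proof (intro allI impI)
    fix x :: real assume x: "x > 0"
    obtain K2 where K2: "\<forall>y\<in>{m..M}. vB r mu sig beta lam h y \<ge> K2"
      unfolding vB_G by (rule G_bdd[OF m0])
    obtain K3 where K3: "\<forall>y\<in>{y0..m}. vC r mu sig beta lam h y \<ge> K3"
      unfolding vC_G by (rule G_bdd[OF y00])
    define K1 where "K1 = - (1/(r*beta)) * exp (lam*beta*h)"
    have "\<forall>y\<in>{y0..}. min K1 (min K2 K3) \<le> vdual r mu sig beta lam y h + x * y"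
    proof
      fix y assume "y \<in> {y0..}"
      hence y: "y \<ge> y0" "y > 0" using y00 by auto
      have xy: "x * y \<ge> 0" using x y by simp
      show "min K1 (min K2 K3) \<le> vdual r mu sig beta lam y h + x * y"
      proof (cases "M \<le> y")
        case True
        have "vA r mu sig beta lam h y \<ge> K1" unfolding vA_def K1_def using C2p y by simp
        thus ?thesis using True xy unfolding vdual_def M_def by simp
      next
        case c1: False
        show ?thesis
        proof (cases "m < y")
          case True
          have "vB r mu sig beta lam h y \<ge> K2" using K2 True c1 by simp
          thus ?thesis using True c1 xy unfolding vdual_def M_def m_def by simp
        next
          case False
          have "vC r mu sig beta lam h y \<ge> K3" using K3 False y by simp
          thus ?thesis using False c1 xy unfolding vdual_def M_def m_def by simp
        qed
      qed
    qed
    thus "bdd_below ((\<lambda>y. vdual r mu sig beta lam y h + x * y) ` {y0..})"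
      by (auto simp: bdd_below_def)
  qed
  have part5: "\<forall>y. y0 \<le> y \<longrightarrow> pidag r mu sig beta lam y h > 0"
  proof (intro allI impI)
    fix y assume yy: "y0 \<le> y"
    hence y: "y > 0" using y00 by linarith
    have c: "(mu - r) / sig\<^sup>2 > 0" using assms by simp
    show "pidag r mu sig beta lam y h > 0"
    proof (cases "M \<le> y")
      case True
      have "Q * C2 r mu sig beta lam h * y powr (b - 1) > 0" using Qp C2p y by simp
      note cc = mult_pos_pos[OF c this]
      show ?thesis unfolding pidag_def Let_def a_def[symmetric] b_def[symmetric] Q_def[symmetric] M_def[symmetric]
        using True cc by simp
    next
      case c1: False
      show ?thesis
      proof (cases "m < y")
        case True
        have e: "Q * C3 r mu sig beta lam h * y powr (a - 1) + Q * C4 r mu sig beta lam h * y powr (b - 1)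
           + 1 / (r * beta) = P y / y"
          unfolding P_def powr_m1[OF y] using y by (simp add: field_simps)
        have "P y / y > 0" using Pp[of y] True c1 y by simp
        note cc = mult_pos_pos[OF c this]
        show ?thesis unfolding pidag_def Let_def a_def[symmetric] b_def[symmetric] Q_def[symmetric]
            M_def[symmetric] m_def[symmetric] e using c1 True cc by simp
      next
        case False
        have "Q * C5 r mu sig beta lam h * y powr (a - 1) + Q * C6 r mu sig beta lam h * y powr (b - 1) > 0"
          using Qp C5p C6p y by (intro add_pos_pos mult_pos_pos) auto
        note cc = mult_pos_pos[OF c this]
        show ?thesis unfolding pidag_def Let_def a_def[symmetric] b_def[symmetric] Q_def[symmetric]
            M_def[symmetric] m_def[symmetric] using c1 False cc by simp
      qed
    qed
  qed
  show ?thesis using part1 part2 part3 part4 part5 unfolding y0_def m_def by blast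
qed

end
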